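(* Let $0<\alpha<1$ and $p,q>0$. If $\mathrm{Tr}\,\widetilde{SG}_{\alpha,p}(A,B)\le\mathrm{Tr}\,\mathcal{A}_{\alpha,q}(A,B)$ holds for all positive definite $2\times2$ matrices $A,B$, then $\min\{1,(1-\alpha)p\}\le q$.
   Context: For positive definite $A,B$: $A\#_\alpha B:=A^{1/2}(A^{-1/2}BA^{-1/2})^\alpha A^{1/2}$; $\widetilde F_\alpha(A,B):=(A^{-1}\#_\alpha B)^{1/2}A^{2(1-\alpha)}(A^{-1}\#_\alpha B)^{1/2}$; $\widetilde{SG}_{\alpha,p}(A,B):=\widetilde F_\alpha(A^p,B^p)^{1/p}$; $\mathcal{A}_{\alpha,q}(A,B):=((1-\alpha)A^q+\alpha B^q)^{1/q}$. $\mathrm{Tr}$ is the usual trace. *)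

theory Defs
  imports "HOL-Analysis.Analysis"
begin

definition cmat_adj :: "complex^'n^'n \<Rightarrow> complex^'n^'n" where
  "cmat_adj A = (\<chi> i j. cnj (A $ j $ i))"

definition cmat_hermitian :: "complex^'n^'n \<Rightarrow> bool" where
  "cmat_hermitian A \<longleftrightarrow> cmat_adj A = A"

definition cmat_posdef :: "complex^'n::finite^'n \<Rightarrow> bool" where
  "cmat_posdef A \<longleftrightarrow> cmat_hermitian A \<and>
     (\<forall>x::complex^'n. x \<noteq> 0 \<longrightarrow>
        Re (\<Sum>i\<in>UNIV. \<Sum>j\<in>UNIV. cnj (x $ i) * A $ i $ j * x $ j) > 0)"

definition cmat_unitary :: "complex^'n::finite^'n \<Rightarrow> bool" where
  "cmat_unitary U \<longleftrightarrow> U ** cmat_adj U = mat 1 \<and> cmat_adj U ** U = mat 1"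

definition cmat_diag :: "('n \<Rightarrow> real) \<Rightarrow> complex^'n^'n" where
  "cmat_diag d = (\<chi> i j. if i = j then complex_of_real (d i) else 0)"

text \<open>Real power of a positive definite matrix via spectral decomposition
  A = U diag(d) U*, A^r = U diag(d^r) U* (independent of the decomposition).\<close>
definition cmat_powr :: "complex^'n::finite^'n \<Rightarrow> real \<Rightarrow> complex^'n^'n" where
  "cmat_powr A r = (SOME X. \<exists>U d. cmat_unitary U \<and> (\<forall>i. d i > 0) \<and>
      A = U ** cmat_diag d ** cmat_adj U \<and>
      X = U ** cmat_diag (\<lambda>i. d i powr r) ** cmat_adj U)"

definition gmean :: "real \<Rightarrow> complex^'n::finite^'n \<Rightarrow> complex^'n^'n \<Rightarrow> complex^'n^'n" where
  "gmean \<alpha> A B = cmat_powr A (1/2) **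
     cmat_powr (cmat_powr A (-1/2) ** B ** cmat_powr A (-1/2)) \<alpha> ** cmat_powr A (1/2)"

definition Ftilde :: "real \<Rightarrow> complex^'n::finite^'n \<Rightarrow> complex^'n^'n \<Rightarrow> complex^'n^'n" where
  "Ftilde \<alpha> A B = (let G = gmean \<alpha> (matrix_inv A) B in
     cmat_powr G (1/2) ** cmat_powr A (2 * (1 - \<alpha>)) ** cmat_powr G (1/2))"

definition SGtilde :: "real \<Rightarrow> real \<Rightarrow> complex^'n::finite^'n \<Rightarrow> complex^'n^'n \<Rightarrow> complex^'n^'n" where
  "SGtilde \<alpha> p A B = cmat_powr (Ftilde \<alpha> (cmat_powr A p) (cmat_powr B p)) (1/p)"

definition Amean :: "real \<Rightarrow> real \<Rightarrow> complex^'n::finite^'n \<Rightarrow> complex^'n^'n \<Rightarrow> complex^'n^'n" where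
  "Amean \<alpha> q A B = cmat_powr ((1 - \<alpha>) *\<^sub>R cmat_powr A q + \<alpha> *\<^sub>R cmat_powr B q) (1/q)"

end

theory Submission
  imports Defs
begin

definition mk :: "complex \<Rightarrow> complex \<Rightarrow> complex \<Rightarrow> complex \<Rightarrow> complex^2^2" where
  "mk a b c d = (\<chi> i j. if i = 1 then (if j = 1 then a else b) else (if j = 1 then c else d))"

lemma mk_nth [simp]: "mk a b c d $ 1 $ 1 = a" "mk a b c d $ 1 $ 2 = b"
  "mk a b c d $ 2 $ 1 = c" "mk a b c d $ 2 $ 2 = d"
  by (simp_all add: mk_def)

lemma mk_ext: "(\<And>i j. X$i$j = Y$i$j) \<Longrightarrow> X = Y"
  by (simp add: vec_eq_iff)

lemma mk_ext2: "X$1$1 = Y$1$1 \<Longrightarrow> X$1$2 = Y$1$2 \<Longrightarrow> X$2$1 = Y$2$1 \<Longrightarrow> X$2$2 = Y$2$2 \<Longrightarrow> X = (Y::'a^2^2)"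
  apply (rule mk_ext)
  subgoal for i j using exhaust_2[of i] exhaust_2[of j] by auto
  done

lemma mk_eta: "X = mk (X$1$1) (X$1$2) (X$2$1) (X$2$2)"
  by (rule mk_ext2) simp_all

lemma mk_eq [simp]: "mk a b c d = mk a' b' c' d' \<longleftrightarrow> a = a' \<and> b = b' \<and> c = c' \<and> d = d'"
proof
  assume H: "mk a b c d = mk a' b' c' d'"
  have "mk a b c d $1$1 = mk a' b' c' d' $1$1" "mk a b c d $1$2 = mk a' b' c' d' $1$2"
       "mk a b c d $2$1 = mk a' b' c' d' $2$1" "mk a b c d $2$2 = mk a' b' c' d' $2$2" using H by simp_all
  thus "a = a' \<and> b = b' \<and> c = c' \<and> d = d'" by simp
qed simp

lemma mk_mult [simp]: "mk a b c d ** mk e f g h = mk (a*e+b*g) (a*f+b*h) (c*e+d*g) (c*f+d*h)"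
  by (rule mk_ext2) (simp_all add: matrix_matrix_mult_def sum_2)

lemma adj_mk [simp]: "cmat_adj (mk a b c d) = mk (cnj a) (cnj c) (cnj b) (cnj d)"
  by (rule mk_ext2) (simp_all add: cmat_adj_def)

lemma diag_mk: "cmat_diag d = mk (d 1) 0 0 (d 2)"
  by (rule mk_ext2) (simp_all add: cmat_diag_def)

lemma mat1_mk: "(mat 1 :: complex^2^2) = mk 1 0 0 1"
  by (rule mk_ext2) (simp_all add: mat_def)

lemma trace_mk [simp]: "trace (mk a b c d) = a + d"
  by (simp add: trace_def sum_2)

lemma add_mk [simp]: "mk a b c d + mk e f g h = mk (a+e) (b+f) (c+g) (d+h)"
  by (rule mk_ext2) simp_all

lemma scaleR_mk [simp]: "r *\<^sub>R mk a b c d = mk (r *\<^sub>R a) (r *\<^sub>R b) (r *\<^sub>R c) (r *\<^sub>R d)"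
  by (rule mk_ext2) simp_all

lemma diag_mult_left: "(cmat_diag d ** W) $ i $ j = complex_of_real (d i) * W $ i $ j"
proof -
  have "(cmat_diag d ** W) $ i $ j = (\<Sum>k\<in>UNIV. (if i = k then complex_of_real (d i) * W $ k $ j else 0))"
    unfolding matrix_matrix_mult_def cmat_diag_def by (simp only: vec_lambda_beta) (rule sum.cong; simp)
  thus ?thesis by simp
qed
lemma diag_mult_right: "(W ** cmat_diag d) $ i $ j = W $ i $ j * complex_of_real (d j)"
proof -
  have "(W ** cmat_diag d) $ i $ j = (\<Sum>k\<in>UNIV. (if k = j then W $ i $ k * complex_of_real (d j) else 0))"
    unfolding matrix_matrix_mult_def cmat_diag_def by (simp only: vec_lambda_beta) (rule sum.cong; simp)
  thus ?thesis by simp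
qed

lemma decomp_transfer:
  fixes U V :: "complex^'n::finite^'n"
  assumes U: "cmat_unitary U" and V: "cmat_unitary V"
    and eq: "U ** cmat_diag d ** cmat_adj U = V ** cmat_diag e ** cmat_adj V"
  shows "U ** cmat_diag (\<lambda>i. f (d i)) ** cmat_adj U = V ** cmat_diag (\<lambda>i. f (e i)) ** cmat_adj V"
proof -
  define W where "W = cmat_adj U ** V"
  have UU: "cmat_adj U ** U = mat 1" "U ** cmat_adj U = mat 1" using U by (auto simp: cmat_unitary_def)
  have VV: "cmat_adj V ** V = mat 1" "V ** cmat_adj V = mat 1" using V by (auto simp: cmat_unitary_def)
  have "cmat_adj U ** (U ** cmat_diag d ** cmat_adj U) ** V = cmat_adj U ** (V ** cmat_diag e ** cmat_adj V) ** V"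
    using eq by simp
  hence dW: "cmat_diag d ** W = W ** cmat_diag e"
    by (simp add: W_def matrix_mul_assoc UU VV) (simp add: matrix_mul_assoc[symmetric] VV)
  have fW: "cmat_diag (\<lambda>i. f (d i)) ** W = W ** cmat_diag (\<lambda>i. f (e i))"
  proof (subst vec_eq_iff, intro allI, subst vec_eq_iff, intro allI)
    fix i j
    have "complex_of_real (d i) * W $ i $ j = W $ i $ j * complex_of_real (e j)"
      using dW by (metis diag_mult_left diag_mult_right)
    hence "W $ i $ j = 0 \<or> d i = e j" by (simp add: mult.commute)
    thus "(cmat_diag (\<lambda>i. f (d i)) ** W) $ i $ j = (W ** cmat_diag (\<lambda>i. f (e i))) $ i $ j"
      by (auto simp: diag_mult_left diag_mult_right)
  qed
  have "U ** cmat_diag (\<lambda>i. f (d i)) ** cmat_adj U = U ** cmat_diag (\<lambda>i. f (d i)) ** (cmat_adj U ** V ** cmat_adj V)"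
    by (simp add: VV matrix_mul_assoc[symmetric])
  also have "\<dots> = U ** (cmat_diag (\<lambda>i. f (d i)) ** W) ** cmat_adj V"
    by (simp add: W_def matrix_mul_assoc)
  also have "\<dots> = U ** (W ** cmat_diag (\<lambda>i. f (e i))) ** cmat_adj V" by (simp add: fW)
  also have "\<dots> = V ** cmat_diag (\<lambda>i. f (e i)) ** cmat_adj V"
    by (simp add: W_def matrix_mul_assoc UU)
  finally show ?thesis .
qed

lemma powr_decomp:
  fixes U :: "complex^'n::finite^'n"
  assumes U: "cmat_unitary U" and d: "\<forall>i. d i > 0" and X: "X = U ** cmat_diag d ** cmat_adj U"
  shows "cmat_powr X r = U ** cmat_diag (\<lambda>i. d i powr r) ** cmat_adj U"
proof -
  let ?P = "\<lambda>Y. \<exists>U d. cmat_unitary U \<and> (\<forall>i. d i > 0) \<and>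
      X = U ** cmat_diag d ** cmat_adj U \<and> Y = U ** cmat_diag (\<lambda>i. d i powr r) ** cmat_adj U"
  have "?P (U ** cmat_diag (\<lambda>i. d i powr r) ** cmat_adj U)" using U d X by blast
  hence "?P (cmat_powr X r)" unfolding cmat_powr_def by (rule someI)
  then obtain V e where V: "cmat_unitary V" "\<forall>i. e i > 0" "X = V ** cmat_diag e ** cmat_adj V"
    and Y: "cmat_powr X r = V ** cmat_diag (\<lambda>i. e i powr r) ** cmat_adj V" by blast
  show ?thesis unfolding Y
    by (rule decomp_transfer[OF V(1) U]) (use X V(3) in simp)
qed

definition det2 :: "complex^2^2 \<Rightarrow> complex" where
  "det2 X = X$1$1 * X$2$2 - X$1$2 * X$2$1"

lemma det2_mk [simp]: "det2 (mk a b c d) = a*d - b*c" by (simp add: det2_def)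

lemma det2_mult: "det2 (X ** Y) = det2 X * det2 Y"
proof -
  obtain a b c d where X: "X = mk a b c d" using mk_eta by blast
  obtain e f g h where Y: "Y = mk e f g h" using mk_eta by blast
  show ?thesis unfolding X Y by (simp add: algebra_simps)
qed

definition decomp :: "complex^2^2 \<Rightarrow> complex^2^2 \<Rightarrow> (2 \<Rightarrow> real) \<Rightarrow> bool" where
  "decomp X U d \<longleftrightarrow> cmat_unitary U \<and> (\<forall>i. d i > 0) \<and> X = U ** cmat_diag d ** cmat_adj U"

lemma decomp_trace: "decomp X U d \<Longrightarrow> trace X = of_real (d 1 + d 2)"
proof -
  assume H: "decomp X U d"
  hence UU: "cmat_adj U ** U = mat 1" and X: "X = U ** cmat_diag d ** cmat_adj U"
    by (auto simp: decomp_def cmat_unitary_def)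
  have "trace X = trace (U ** (cmat_diag d ** cmat_adj U))" by (simp add: X matrix_mul_assoc)
  also have "\<dots> = trace ((cmat_diag d ** cmat_adj U) ** U)" by (rule trace_mul_sym)
  also have "\<dots> = trace (cmat_diag d)" by (simp add: matrix_mul_assoc[symmetric] UU)
  finally show ?thesis by (simp add: diag_mk)
qed

lemma decomp_det: "decomp X U d \<Longrightarrow> det2 X = of_real (d 1 * d 2)"
proof -
  assume H: "decomp X U d"
  hence UU: "U ** cmat_adj U = mat 1" and X: "X = U ** cmat_diag d ** cmat_adj U"
    by (auto simp: decomp_def cmat_unitary_def)
  have "det2 U * det2 (cmat_adj U) = 1" using det2_mult[of U "cmat_adj U"] UU by (simp add: mat1_mk)
  hence "det2 X = det2 (cmat_diag d) * (det2 U * det2 (cmat_adj U))"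
    by (simp add: X det2_mult)
  also have "\<dots> = det2 (cmat_diag d)" using \<open>det2 U * det2 (cmat_adj U) = 1\<close> by simp
  finally show ?thesis by (simp add: diag_mk)
qed

definition evp :: "real \<Rightarrow> real \<Rightarrow> real" where "evp t D = t/2 + sqrt (t^2/4 - D)"
definition evm :: "real \<Rightarrow> real \<Rightarrow> real" where "evm t D = t/2 - sqrt (t^2/4 - D)"

lemma roots_evs:
  fixes x y t D :: real
  assumes "x + y = t" "x * y = D"
  shows "(x = evp t D \<and> y = evm t D) \<or> (x = evm t D \<and> y = evp t D)"
proof -
  have "t^2/4 - D = ((x - y)/2)^2" by (simp add: assms[symmetric] power2_eq_square field_simps)
  hence s: "sqrt (t^2/4 - D) = \<bar>x - y\<bar>/2" by simp
  show ?thesis unfolding evp_def evm_def s using assms(1) by (cases "x \<ge> y") (auto simp: field_simps)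
qed

lemma decomp_evs:
  assumes "decomp X U d" "trace X = of_real t" "det2 X = of_real D"
  shows "(d 1 = evp t D \<and> d 2 = evm t D) \<or> (d 1 = evm t D \<and> d 2 = evp t D)"
proof -
  have "d 1 + d 2 = t" using decomp_trace[OF assms(1)] assms(2) by (metis of_real_eq_iff)
  moreover have "d 1 * d 2 = D" using decomp_det[OF assms(1)] assms(3) by (metis of_real_eq_iff)
  ultimately show ?thesis by (rule roots_evs)
qed

lemma decomp_powr:
  assumes "decomp X U d"
  shows "decomp (cmat_powr X r) U (\<lambda>i. d i powr r)"
proof -
  have U: "cmat_unitary U" and d: "\<forall>i. d i > 0" and X: "X = U ** cmat_diag d ** cmat_adj U"
    using assms by (auto simp: decomp_def)
  have "\<And>i. d i powr r > 0" using d by (metis powr_gt_zero less_irrefl)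
  thus ?thesis using powr_decomp[OF U d X] U unfolding decomp_def by simp
qed

lemma decomp_powr_trace:
  assumes "decomp X U d" "trace X = of_real t" "det2 X = of_real D"
  shows "trace (cmat_powr X r) = of_real (evp t D powr r + evm t D powr r)"
  using decomp_trace[OF decomp_powr[OF assms(1)]] decomp_evs[OF assms] by auto

lemma decomp_powr_det:
  assumes "decomp X U d" "det2 X = of_real D"
  shows "det2 (cmat_powr X r) = of_real (D powr r)"
proof -
  have "d 1 * d 2 = D" using decomp_det[OF assms(1)] assms(2) by (metis of_real_eq_iff)
  moreover have "d 1 > 0" "d 2 > 0" using assms(1) by (auto simp: decomp_def)
  ultimately show ?thesis using decomp_det[OF decomp_powr[OF assms(1)], of r]
    by (simp add: powr_mult[symmetric] flip: of_real_mult)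
qed

lemma scaleR_mm_left: "(c *\<^sub>R (A::complex^'n^'m)) ** B = c *\<^sub>R (A ** B)"
  by (simp add: vec_eq_iff matrix_matrix_mult_def scaleR_sum_right)

lemma scaleR_mm_right: "(A::complex^'n^'m) ** (c *\<^sub>R B) = c *\<^sub>R (A ** B)"
  by (simp add: vec_eq_iff matrix_matrix_mult_def scaleR_sum_right)

lemma matrix_add_rdistrib': "((B + C) ** (A::complex^'n^'m)) = (B ** A) + (C ** A)"
  by (vector matrix_matrix_mult_def sum.distrib[symmetric] field_simps)

lemma decomp_interp:
  assumes "decomp X U d" "\<And>i. f (d i) = b0 + b1 * d i"
  shows "cmat_powr X r = U ** cmat_diag (\<lambda>i. f (d i)) ** cmat_adj U \<Longrightarrow>
     cmat_powr X r = b0 *\<^sub>R mat 1 + b1 *\<^sub>R X"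
proof -
  assume P: "cmat_powr X r = U ** cmat_diag (\<lambda>i. f (d i)) ** cmat_adj U"
  have UU: "U ** cmat_adj U = mat 1" and X: "X = U ** cmat_diag d ** cmat_adj U"
    using assms(1) by (auto simp: decomp_def cmat_unitary_def)
  have "cmat_diag (\<lambda>i. f (d i)) = b0 *\<^sub>R mat 1 + b1 *\<^sub>R cmat_diag d"
    unfolding diag_mk mat1_mk scaleR_mk add_mk by (simp add: assms(2) scaleR_conv_of_real)
  hence "cmat_powr X r = U ** (b0 *\<^sub>R mat 1 + b1 *\<^sub>R cmat_diag d) ** cmat_adj U" using P by simp
  also have "\<dots> = b0 *\<^sub>R (U ** cmat_adj U) + b1 *\<^sub>R (U ** cmat_diag d ** cmat_adj U)"
    by (simp add: matrix_add_ldistrib matrix_add_rdistrib' scaleR_mm_left scaleR_mm_right matrix_mul_assoc)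
  finally show ?thesis by (simp add: UU X[symmetric])
qed

lemma decomp_half:
  assumes "decomp X U d"
  shows "cmat_powr X (1/2) ** cmat_powr X (1/2) = X"
proof -
  have UU: "cmat_adj U ** U = mat 1" and X: "X = U ** cmat_diag d ** cmat_adj U"
   and d: "\<forall>i. d i > 0"
    using assms(1) by (auto simp: decomp_def cmat_unitary_def)
  have P: "cmat_powr X (1/2) = U ** cmat_diag (\<lambda>i. d i powr (1/2)) ** cmat_adj U"
    using powr_decomp assms by (auto simp: decomp_def)
  have "cmat_diag (\<lambda>i. d i powr (1/2)) ** cmat_diag (\<lambda>i. d i powr (1/2)) = cmat_diag d"
    using d[rule_format, of 1] d[rule_format, of 2] by (simp add: diag_mk flip: of_real_mult powr_add)
  hence "cmat_powr X (1/2) ** cmat_powr X (1/2) = U ** (cmat_diag (\<lambda>i. d i powr (1/2)) ** (cmat_adj U ** U) ** cmat_diag (\<lambda>i. d i powr (1/2))) ** cmat_adj U"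
    unfolding P by (simp add: matrix_mul_assoc)
  also have "\<dots> = X" using \<open>_ = cmat_diag d\<close> by (simp add: UU X matrix_mul_assoc)
  finally show ?thesis .
qed

definition rs :: "real \<Rightarrow> real \<Rightarrow> real \<Rightarrow> complex^2^2" where
  "rs a b c = mk (of_real a) (of_real b) (of_real b) (of_real c)"

definition rpd :: "real \<Rightarrow> real \<Rightarrow> real \<Rightarrow> bool" where
  "rpd a b c \<longleftrightarrow> a + c > 0 \<and> a * c - b^2 > 0"

lemma rpd_pos: "rpd a b c \<Longrightarrow> a > 0 \<and> c > 0"
proof -
  assume "rpd a b c"
  hence "a + c > 0" "a * c > 0" unfolding rpd_def by (auto intro: le_less_trans[OF zero_le_power2])
  thus ?thesis by (auto simp: zero_less_mult_iff)
qed

lemma trace_rs [simp]: "trace (rs a b c) = of_real (a + c)" by (simp add: rs_def)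
lemma det2_rs [simp]: "det2 (rs a b c) = of_real (a * c - b^2)" by (simp add: rs_def power2_eq_square)
lemma rs_eq [simp]: "rs a b c = rs a' b' c' \<longleftrightarrow> a = a' \<and> b = b' \<and> c = c'" by (simp add: rs_def)

definition rot :: "real \<Rightarrow> real \<Rightarrow> complex^2^2" where
  "rot u1 u2 = mk (of_real u1) (of_real (-u2)) (of_real u2) (of_real u1)"

lemma rot_unitary: "u1^2 + u2^2 = 1 \<Longrightarrow> cmat_unitary (rot u1 u2)"
proof -
  assume H: "u1^2 + u2^2 = 1"
  have H': "complex_of_real u1 * complex_of_real u1 + complex_of_real u2 * complex_of_real u2 = 1"
    using arg_cong[OF H, of complex_of_real] by (simp add: power2_eq_square)
  show ?thesis unfolding cmat_unitary_def rot_def mat1_mk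
    using H' by (simp add: algebra_simps)
qed

lemma rot_prod: "rot u1 u2 ** cmat_diag (\<lambda>i. if i = 1 then x else y) ** cmat_adj (rot u1 u2) =
   rs (u1^2 * x + u2^2 * y) (u1 * u2 * (x - y)) (u2^2 * x + u1^2 * y)"
  by (simp add: rot_def rs_def diag_mk power2_eq_square algebra_simps)

lemma mat1_unitary: "cmat_unitary (mat 1 :: complex^2^2)"
  by (simp add: cmat_unitary_def mat1_mk)

lemma diag_decomp: "x > 0 \<Longrightarrow> y > 0 \<Longrightarrow> decomp (rs x 0 y) (mat 1) (\<lambda>i. if i = 1 then x else y)"
  by (simp add: decomp_def mat1_unitary) (simp add: mat1_mk diag_mk rs_def)

lemma diag_powr: "x > 0 \<Longrightarrow> y > 0 \<Longrightarrow> cmat_powr (rs x 0 y) r = rs (x powr r) 0 (y powr r)"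
proof -
  assume "x > 0" "y > 0"
  hence "decomp (rs x 0 y) (mat 1) (\<lambda>i. if i = 1 then x else y)" by (rule diag_decomp)
  hence "cmat_powr (rs x 0 y) r = mat 1 ** cmat_diag (\<lambda>i. (if i = 1 then x else y) powr r) ** cmat_adj (mat 1)"
    using powr_decomp[of "mat 1" "\<lambda>i. if i = 1 then x else y" "rs x 0 y" r] unfolding decomp_def by blast
  thus ?thesis by (simp add: mat1_mk diag_mk rs_def)
qed

lemma rot_decomp: "u1^2 + u2^2 = 1 \<Longrightarrow> x > 0 \<Longrightarrow> y > 0 \<Longrightarrow>
   decomp (rs (u1^2 * x + u2^2 * y) (u1 * u2 * (x - y)) (u2^2 * x + u1^2 * y)) (rot u1 u2) (\<lambda>i. if i = 1 then x else y)"
  by (simp add: decomp_def rot_unitary rot_prod)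

lemma rot_powr: "u1^2 + u2^2 = 1 \<Longrightarrow> x > 0 \<Longrightarrow> y > 0 \<Longrightarrow>
   cmat_powr (rs (u1^2 * x + u2^2 * y) (u1 * u2 * (x - y)) (u2^2 * x + u1^2 * y)) r =
   rs (u1^2 * x powr r + u2^2 * y powr r) (u1 * u2 * (x powr r - y powr r)) (u2^2 * x powr r + u1^2 * y powr r)"
proof -
  assume H: "u1^2 + u2^2 = 1" "x > 0" "y > 0"
  have "(\<lambda>i. (if i = (1::2) then x else y) powr r) = (\<lambda>i. if i = 1 then x powr r else y powr r)" by auto
  thus ?thesis using powr_decomp[of "rot u1 u2" "\<lambda>i. if i = 1 then x else y" _ r] rot_decomp[OF H]
    by (simp add: decomp_def rot_prod)
qed

lemma evp_evm_pos:
  assumes "t > 0" "D > 0" "t^2/4 - D \<ge> 0"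
  shows "evm t D > 0" "evp t D > 0" "evp t D \<ge> evm t D"
proof -
  have "sqrt (t^2/4 - D) < sqrt ((t/2)^2)" using assms by (intro real_sqrt_less_mono) (simp add: power_divide)
  hence "sqrt (t^2/4 - D) < t/2" using assms by simp
  moreover have "sqrt (t^2/4 - D) \<ge> 0" using assms(3) by (rule real_sqrt_ge_zero)
  ultimately show "evm t D > 0" "evp t D > 0" "evp t D \<ge> evm t D" unfolding evm_def evp_def using assms(1) by linarith+
qed

lemma rpd_disc: "t^2/4 - (a*c - b^2) = ((a - c)/2)^2 + b^2" if "t = a + c" for a b c t :: real
  using that by (simp add: power2_eq_square field_simps)

lemma evp_root: "s \<ge> 0 \<Longrightarrow> evp t D ^ 2 - t * evp t D + D = 0" if "s = t^2/4 - D"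
  using that unfolding evp_def by (simp add: power2_eq_square algebra_simps)

lemma rs_decomp:
  assumes R: "rpd a b c"
  shows "\<exists>U d. decomp (rs a b c) U d"
proof (cases "b = 0")
  case True
  have "a > 0" "c > 0" using rpd_pos[OF R] by auto
  thus ?thesis using diag_decomp True by blast
next
  case False
  define t where "t = a + c"
  define D where "D = a * c - b^2"
  have t: "t > 0" and D: "D > 0" using R by (auto simp: rpd_def t_def D_def)
  have dd: "t^2/4 - D = ((a - c)/2)^2 + b^2" unfolding t_def D_def by (simp add: power2_eq_square field_simps)
  have disc: "t^2/4 - D \<ge> 0" unfolding dd by (intro add_nonneg_nonneg zero_le_power2)
  define l where "l = evp t D"
  define m where "m = evm t D"
  have lpos: "l > 0" "m > 0" using evp_evm_pos[OF t D disc] by (auto simp: l_def m_def)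
  have lm: "l + m = t" by (simp add: l_def m_def evp_def evm_def)
  have root: "l^2 - t * l + D = 0" using evp_root[OF refl disc] by (simp add: l_def)
  define n where "n = sqrt (b^2 + (l - a)^2)"
  have npos: "n > 0" using False by (simp add: n_def add_pos_nonneg)
  define u1 where "u1 = b / n"
  define u2 where "u2 = (l - a) / n"
  have N: "u1^2 + u2^2 = 1" using npos unfolding u1_def u2_def n_def
    by (simp add: power_divide add_divide_distrib[symmetric] add_pos_nonneg False)
  have E1: "a * u1 + b * u2 = l * u1" using npos unfolding u1_def u2_def by (simp add: field_simps)
  have E2: "b * u1 + c * u2 = l * u2" using root npos unfolding u1_def u2_def t_def D_def
    by (simp add: field_simps power2_eq_square)
  have mdef: "m = a + c - l" using lm t_def by simp
  have F1: "l * u1^2 - a * u1^2 - b * u1 * u2 = 0" using arg_cong[OF E1, of "\<lambda>z. z*u1"] by (simp add: power2_eq_square algebra_simps)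
  have F2: "l * u2^2 - b * u1 * u2 - c * u2^2 = 0" using arg_cong[OF E2, of "\<lambda>z. z*u2"] by (simp add: power2_eq_square algebra_simps)
  have F3: "l * u1 * u2 - a * u1 * u2 - b * u2^2 = 0" using arg_cong[OF E1, of "\<lambda>z. z*u2"] by (simp add: power2_eq_square algebra_simps)
  have F4: "l * u1 * u2 - b * u1^2 - c * u1 * u2 = 0" using arg_cong[OF E2, of "\<lambda>z. z*u1"] by (simp add: power2_eq_square algebra_simps)
  have N0: "u1^2 + u2^2 - 1 = 0" using N by simp
  have "u1^2 * l + u2^2 * m - a = (l * u1^2 - a * u1^2 - b * u1 * u2) - (l * u2^2 - b * u1 * u2 - c * u2^2) + a * (u1^2 + u2^2 - 1)"
    unfolding mdef by (simp add: algebra_simps)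
  hence e11: "u1^2 * l + u2^2 * m = a" using F1 F2 N0 by simp
  have "u1 * u2 * (l - m) - b = (l * u1 * u2 - a * u1 * u2 - b * u2^2) + (l * u1 * u2 - b * u1^2 - c * u1 * u2) + b * (u1^2 + u2^2 - 1)"
    unfolding mdef by (simp add: algebra_simps)
  hence e12: "u1 * u2 * (l - m) = b" using F3 F4 N0 by simp
  have "u2^2 * l + u1^2 * m - c = (l * u2^2 - b * u1 * u2 - c * u2^2) - (l * u1^2 - a * u1^2 - b * u1 * u2) + c * (u1^2 + u2^2 - 1)"
    unfolding mdef by (simp add: algebra_simps)
  hence e22: "u2^2 * l + u1^2 * m = c" using F1 F2 N0 by simp
  have "decomp (rs a b c) (rot u1 u2) (\<lambda>i. if i = 1 then l else m)"
    using rot_decomp[OF N lpos] by (simp add: e11 e12 e22)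
  thus ?thesis by blast
qed

lemma cnj_mult_Re: "Re (cnj z * of_real a * w) = a * (Re z * Re w + Im z * Im w)"
  by (simp add: algebra_simps)

lemma quad_pos:
  fixes a b c x y :: real
  assumes "a > 0" "a * c - b^2 > 0"
  shows "a * x^2 + 2 * b * x * y + c * y^2 \<ge> 0"
    and "(x, y) \<noteq> (0, 0) \<Longrightarrow> a * x^2 + 2 * b * x * y + c * y^2 > 0"
proof -
  have id: "a * (a * x^2 + 2 * b * x * y + c * y^2) = (a * x + b * y)^2 + (a * c - b^2) * y^2"
    by (simp add: power2_eq_square algebra_simps)
  have Qeq: "a * x^2 + 2 * b * x * y + c * y^2 = ((a * x + b * y)^2 + (a * c - b^2) * y^2) / a"
    using id assms(1) by (simp add: eq_divide_eq mult.commute)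
  have "0 \<le> (a * x + b * y)^2 + (a * c - b^2) * y^2" using assms by (intro add_nonneg_nonneg) auto
  thus "a * x^2 + 2 * b * x * y + c * y^2 \<ge> 0" unfolding Qeq using assms(1) by simp
  assume "(x, y) \<noteq> (0, 0)"
  hence "0 < (a * x + b * y)^2 + (a * c - b^2) * y^2"
  proof (cases "y = 0")
    case True
    hence "x \<noteq> 0" using \<open>(x, y) \<noteq> (0, 0)\<close> by simp
    thus ?thesis using True assms by simp
  next
    case False
    thus ?thesis using assms by (intro add_nonneg_pos) auto
  qed
  thus "a * x^2 + 2 * b * x * y + c * y^2 > 0" unfolding Qeq using assms(1) by simp
qed

lemma rpd_posdef:
  assumes R: "rpd a b c"
  shows "cmat_posdef (rs a b c)"
proof -
  have a: "a > 0" using rpd_pos[OF R] by simp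
  have d: "a * c - b^2 > 0" using R by (simp add: rpd_def)
  have herm: "cmat_hermitian (rs a b c)" by (simp add: cmat_hermitian_def rs_def)
  have "Re (\<Sum>i\<in>UNIV. \<Sum>j\<in>UNIV. cnj (x $ i) * rs a b c $ i $ j * x $ j) > 0" if "x \<noteq> 0" for x :: "complex^2"
  proof -
    have ne: "x $ 1 \<noteq> 0 \<or> x $ 2 \<noteq> 0" using that by (metis vec_eq_iff exhaust_2 zero_index)
    have "(\<Sum>i\<in>UNIV. \<Sum>j\<in>UNIV. cnj (x $ i) * rs a b c $ i $ j * x $ j) =
       cnj (x$1) * of_real a * x$1 + cnj (x$1) * of_real b * x$2 + (cnj (x$2) * of_real b * x$1 + cnj (x$2) * of_real c * x$2)"
      by (simp add: sum_2 rs_def)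
    hence "Re (\<Sum>i\<in>UNIV. \<Sum>j\<in>UNIV. cnj (x $ i) * rs a b c $ i $ j * x $ j) =
       a * (Re (x$1) * Re (x$1) + Im (x$1) * Im (x$1)) + b * (Re (x$1) * Re (x$2) + Im (x$1) * Im (x$2)) +
       (b * (Re (x$2) * Re (x$1) + Im (x$2) * Im (x$1)) + c * (Re (x$2) * Re (x$2) + Im (x$2) * Im (x$2)))"
      by (simp only: plus_complex.sel cnj_mult_Re)
    also have "\<dots> = (a * (Re (x$1))^2 + 2 * b * Re (x$1) * Re (x$2) + c * (Re (x$2))^2) +
      (a * (Im (x$1))^2 + 2 * b * Im (x$1) * Im (x$2) + c * (Im (x$2))^2)"
      by (simp add: power2_eq_square algebra_simps)
    finally have E: "Re (\<Sum>i\<in>UNIV. \<Sum>j\<in>UNIV. cnj (x $ i) * rs a b c $ i $ j * x $ j) =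
      (a * (Re (x$1))^2 + 2 * b * Re (x$1) * Re (x$2) + c * (Re (x$2))^2) +
      (a * (Im (x$1))^2 + 2 * b * Im (x$1) * Im (x$2) + c * (Im (x$2))^2)" .
    have q1: "a * (Re (x$1))^2 + 2 * b * Re (x$1) * Re (x$2) + c * (Re (x$2))^2 \<ge> 0"
      and q2: "a * (Im (x$1))^2 + 2 * b * Im (x$1) * Im (x$2) + c * (Im (x$2))^2 \<ge> 0"
      using quad_pos(1)[OF a d] by blast+
    have "(Re (x$1), Re (x$2)) \<noteq> (0,0) \<or> (Im (x$1), Im (x$2)) \<noteq> (0,0)"
      using ne by (auto simp: complex_eq_iff)
    thus ?thesis
    proof
      assume "(Re (x$1), Re (x$2)) \<noteq> (0,0)"
      from quad_pos(2)[OF a d this] q2 show ?thesis unfolding E by linarith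
    next
      assume "(Im (x$1), Im (x$2)) \<noteq> (0,0)"
      from quad_pos(2)[OF a d this] q1 show ?thesis unfolding E by linarith
    qed
  qed
  thus ?thesis using herm by (simp add: cmat_posdef_def)
qed

lemma matrix_inv_diag:
  assumes "x \<noteq> 0" "y \<noteq> 0"
  shows "matrix_inv (rs x 0 y) = rs (1/x) 0 (1/y)"
proof -
  let ?M = "rs x 0 y" and ?N = "rs (1/x) 0 (1/y)"
  have MN: "?M ** ?N = mat 1" "?N ** ?M = mat 1" using assms by (simp_all add: rs_def mat1_mk flip: of_real_mult)
  have "?M ** matrix_inv ?M = mat 1 \<and> matrix_inv ?M ** ?M = mat 1"
    unfolding matrix_inv_def by (rule someI[of _ ?N]) (use MN in simp)
  hence "matrix_inv ?M = matrix_inv ?M ** (?M ** ?N)" using MN by simp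
  also have "\<dots> = ?N" using \<open>_ \<and> _\<close> by (simp add: matrix_mul_assoc)
  finally show ?thesis .
qed

definition tr_of :: "real \<Rightarrow> real \<Rightarrow> real \<Rightarrow> real" where "tr_of a b c = a + c"
definition dt_of :: "real \<Rightarrow> real \<Rightarrow> real \<Rightarrow> real" where "dt_of a b c = a * c - b^2"

lemma rs_pow_trace:
  assumes "rpd a b c"
  shows "trace (cmat_powr (rs a b c) r) = of_real (evp (a + c) (a * c - b^2) powr r + evm (a + c) (a * c - b^2) powr r)"
proof -
  obtain U d where "decomp (rs a b c) U d" using rs_decomp[OF assms] by blast
  thus ?thesis by (rule decomp_powr_trace) simp_all
qed

lemma rs_pow_det:
  assumes "rpd a b c"
  shows "det2 (cmat_powr (rs a b c) r) = of_real ((a * c - b^2) powr r)"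
proof -
  obtain U d where "decomp (rs a b c) U d" using rs_decomp[OF assms] by blast
  thus ?thesis by (rule decomp_powr_det) simp_all
qed

lemma rs_pow_half:
  assumes "rpd a b c"
  shows "cmat_powr (rs a b c) (1/2) ** cmat_powr (rs a b c) (1/2) = rs a b c"
proof -
  obtain U d where "decomp (rs a b c) U d" using rs_decomp[OF assms] by blast
  thus ?thesis by (rule decomp_half)
qed

lemma rpd_params:
  assumes "rpd a b c"
  shows "a + c > 0" "a * c - b^2 > 0" "(a + c)^2/4 - (a * c - b^2) \<ge> 0"
    "evp (a + c) (a * c - b^2) > 0" "evm (a + c) (a * c - b^2) > 0"
    "b \<noteq> 0 \<Longrightarrow> evp (a + c) (a * c - b^2) > evm (a + c) (a * c - b^2)"
proof -
  show t: "a + c > 0" and D: "a * c - b^2 > 0" using assms by (auto simp: rpd_def)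
  have dd: "(a + c)^2/4 - (a * c - b^2) = ((a - c)/2)^2 + b^2" by (simp add: power2_eq_square field_simps)
  show disc: "(a + c)^2/4 - (a * c - b^2) \<ge> 0" unfolding dd by (intro add_nonneg_nonneg zero_le_power2)
  show "evp (a + c) (a * c - b^2) > 0" "evm (a + c) (a * c - b^2) > 0" using evp_evm_pos[OF t D disc] by auto
  assume "b \<noteq> 0"
  hence "(a + c)^2/4 - (a * c - b^2) > 0" unfolding dd by (intro add_nonneg_pos) auto
  hence "sqrt ((a + c)^2/4 - (a * c - b^2)) > 0" by simp
  thus "evp (a + c) (a * c - b^2) > evm (a + c) (a * c - b^2)" unfolding evp_def evm_def by linarith
qed

definition beta1 :: "real \<Rightarrow> real \<Rightarrow> real \<Rightarrow> real" where
  "beta1 t D r = (evp t D powr r - evm t D powr r) / (evp t D - evm t D)"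
definition beta0 :: "real \<Rightarrow> real \<Rightarrow> real \<Rightarrow> real" where
  "beta0 t D r = evp t D powr r - beta1 t D r * evp t D"

lemma lin_interp: "p \<noteq> (m::real) \<Longrightarrow> y = (x - (x - y)/(p - m) * p) + (x - y)/(p - m) * m"
proof -
  assume "p \<noteq> m"
  have "(x - y)/(p - m) * p - (x - y)/(p - m) * m = (x - y)/(p - m) * (p - m)"
    by (simp add: right_diff_distrib)
  also have "\<dots> = x - y" using \<open>p \<noteq> m\<close> by simp
  finally have "(x - y)/(p - m) * p - (x - y)/(p - m) * m = x - y" .
  thus ?thesis by simp
qed

lemma rs_pow_interp:
  fixes r :: real
  assumes R: "rpd a b c" and b: "b \<noteq> 0"
  defines "b0 \<equiv> beta0 (a + c) (a * c - b^2) r" and "b1 \<equiv> beta1 (a + c) (a * c - b^2) r"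
  shows "cmat_powr (rs a b c) r = rs (b0 + b1 * a) (b1 * b) (b0 + b1 * c)"
proof -
  obtain U d where dec: "decomp (rs a b c) U d" using rs_decomp[OF R] by blast
  let ?p = "evp (a + c) (a * c - b^2)" and ?m = "evm (a + c) (a * c - b^2)"
  have ne: "?p - ?m \<noteq> 0" using rpd_params(6)[OF R b] by simp
  have ip: "?p powr r = b0 + b1 * ?p" by (simp add: b0_def b1_def beta0_def)
  have im: "?m powr r = b0 + b1 * ?m" using lin_interp[OF ne[unfolded right_minus_eq], where x="?p powr r" and y="?m powr r"]
    unfolding b0_def b1_def beta0_def beta1_def by simp
  have ev: "\<And>i. d i = ?p \<or> d i = ?m" using decomp_evs[OF dec] by (metis exhaust_2 trace_rs det2_rs)
  have f: "\<And>i. d i powr r = b0 + b1 * d i" using ev ip im by metis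
  have P: "cmat_powr (rs a b c) r = U ** cmat_diag (\<lambda>i. d i powr r) ** cmat_adj U"
    using powr_decomp dec by (auto simp: decomp_def)
  have "cmat_powr (rs a b c) r = b0 *\<^sub>R mat 1 + b1 *\<^sub>R rs a b c"
    by (rule decomp_interp[OF dec, of "\<lambda>x. x powr r", OF f P])
  thus ?thesis unfolding rs_def mat1_mk scaleR_mk add_mk by (simp add: scaleR_conv_of_real)
qed

lemma rs_pow_form:
  assumes R: "rpd a b c"
  shows "\<exists>a' b' c'. cmat_powr (rs a b c) r = rs a' b' c' \<and> rpd a' b' c'"
proof -
  obtain a' b' c' where E: "cmat_powr (rs a b c) r = rs a' b' c'"
  proof (cases "b = 0")
    case True
    have "a > 0" "c > 0" using rpd_pos[OF R] by auto
    thus ?thesis using that diag_powr True by blast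
  next
    case False
    thus ?thesis using that rs_pow_interp[OF R False] by blast
  qed
  have "a' + c' = evp (a + c) (a * c - b^2) powr r + evm (a + c) (a * c - b^2) powr r"
    using rs_pow_trace[OF R, of r] E by (metis trace_rs of_real_eq_iff)
  moreover have "a' * c' - b'^2 = (a * c - b^2) powr r"
    using rs_pow_det[OF R, of r] E by (metis det2_rs of_real_eq_iff)
  moreover have "evp (a + c) (a * c - b^2) powr r > 0" "evm (a + c) (a * c - b^2) powr r > 0"
    "(a * c - b^2) powr r > 0" using rpd_params[OF R] by auto
  ultimately have "a' + c' > 0" "a' * c' - b'^2 > 0" by linarith+
  hence "rpd a' b' c'" by (simp add: rpd_def)
  thus ?thesis using E by blast
qed

lemma cong_diag: "rs 1 0 k ** rs a b c ** rs 1 0 k = rs a (k*b) (k*k*c)"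
  by (simp add: rs_def)

lemma rpd_cong: "rpd a b c \<Longrightarrow> k \<noteq> 0 \<Longrightarrow> rpd a (k*b) (k*k*c)"
proof -
  assume R: "rpd a b c" and k: "k \<noteq> 0"
  have "a > 0" "c > 0" using rpd_pos[OF R] by auto
  hence "a + k*k*c > 0" using k by (intro add_pos_nonneg) auto
  moreover have "a * (k*k*c) - (k*b)^2 = (k*k) * (a*c - b^2)" by (simp add: power2_eq_square algebra_simps)
  moreover have "(k*k) * (a*c - b^2) > 0"
  proof (rule mult_pos_pos)
    show "k*k > 0" using k not_real_square_gt_zero by blast
    show "a*c - b^2 > 0" using R by (simp add: rpd_def)
  qed
  ultimately show ?thesis by (simp add: rpd_def)
qed

lemma prod_S: "rs x y z ** rs 1 0 m ** rs x y z = rs (x*x + m*y*y) (x*y + m*y*z) (y*y + m*z*z)"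
  by (simp add: rs_def algebra_simps)

lemma sq_S: "rs x y z ** rs x y z = rs (x*x + y*y) (x*y + y*z) (y*y + z*z)"
  by (simp add: rs_def algebra_simps)

lemma lin_rs: "a *\<^sub>R rs x y z + b *\<^sub>R rs x' y' z' = rs (a*x + b*x') (a*y + b*y') (a*z + b*z')"
  unfolding rs_def scaleR_mk add_mk by (simp add: scaleR_conv_of_real)

lemma sq_powr: "(h::real) > 0 \<Longrightarrow> (h^2) powr r = h powr (2*r)"
  by (simp add: powr_powr flip: powr_numeral)

lemma four_powr: "(h::real) > 0 \<Longrightarrow> (h^4) powr r = h powr (4*r)"
  by (simp add: powr_powr flip: powr_numeral)

definition "b11 c w h = c^2 + w^2 * h^2"
definition "b12 c w h = c * w * (1 - h^2)"
definition "b22 c w h = w^2 + c^2 * h^2"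
definition "tC c w h = b11 c w h + h * h * b22 c w h"
definition "Tf \<alpha> c w h = (beta0 (tC c w h) (h^4) \<alpha> + beta1 (tC c w h) (h^4) \<alpha> * b11 c w h) +
   h powr (4 - 4*\<alpha>) * ((1/h) * (1/h) * (beta0 (tC c w h) (h^4) \<alpha> + beta1 (tC c w h) (h^4) \<alpha> * (h * h * b22 c w h)))"
definition "LHSf \<alpha> p c w h = evp (Tf \<alpha> c w h) (h^2) powr (1/p) + evm (Tf \<alpha> c w h) (h^2) powr (1/p)"

lemma concrete_SG:
  fixes \<alpha> p c w h :: real
  assumes al: "0 < \<alpha>" "\<alpha> < 1" and p: "p > 0" and cw: "c > 0" "w > 0" "c^2 + w^2 = 1" and h: "0 < h" "h < 1"
  defines "s \<equiv> h powr (2/p)"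
  shows "Re (trace (SGtilde \<alpha> p (rs 1 0 s) (rs (c^2 * 1 + w^2 * s) (c * w * (1 - s)) (w^2 * 1 + c^2 * s))))
     = LHSf \<alpha> p c w h"
proof -
  have s0: "s > 0" using h by (simp add: s_def)
  have sp: "s powr p = h^2" using h p by (simp add: s_def powr_powr flip: powr_numeral)
  have Ap: "cmat_powr (rs 1 0 s) p = rs 1 0 (h^2)" using diag_powr[of 1 s p] s0 sp by simp
  have Bp: "cmat_powr (rs (c^2 * 1 + w^2 * s) (c * w * (1 - s)) (w^2 * 1 + c^2 * s)) p
      = rs (b11 c w h) (b12 c w h) (b22 c w h)"
    using rot_powr[OF cw(3), of 1 s p] s0 sp by (simp add: b11_def b12_def b22_def)
  have Inv: "matrix_inv (rs 1 0 (h^2)) = rs 1 0 (1/h^2)" using matrix_inv_diag[of 1 "h^2"] h by simp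
  have hh: "(1/h^2) powr (1/2) = 1/h" using h by (simp add: powr_half_sqrt real_sqrt_divide)
  have hh': "(1/h^2) powr (-1/2) = h"
  proof -
    have "(1/h^2) powr (-1/2) = (1/h^2) powr (- (1/2))" by simp
    also have "\<dots> = 1 / ((1/h^2) powr (1/2))" by (rule powr_minus_divide)
    finally show ?thesis using hh h by simp
  qed
  have Ih1: "cmat_powr (rs 1 0 (1/h^2)) (1/2) = rs 1 0 (1/h)" using diag_powr[of 1 "1/h^2" "1/2"] h hh by simp
  have Ih2: "cmat_powr (rs 1 0 (1/h^2)) (-1/2) = rs 1 0 h" using diag_powr[of 1 "1/h^2" "-1/2"] h hh' by simp
  have hne: "h \<noteq> 0" using h by simp
  have h2: "h^2 < 1" using h by (simp add: power_less_one_iff abs_less_iff)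
  have detB: "b11 c w h * b22 c w h - (b12 c w h)^2 = h^2"
  proof -
    have "b11 c w h * b22 c w h - (b12 c w h)^2 = h^2 * (c^2 + w^2)^2"
      by (simp add: b11_def b12_def b22_def power2_eq_square algebra_simps)
    thus ?thesis using cw(3) by simp
  qed
  have b11p: "b11 c w h > 0" using cw by (simp add: b11_def add_pos_nonneg)
  have b22p: "b22 c w h > 0" using cw by (simp add: b22_def add_pos_nonneg)
  have b12ne: "b12 c w h \<noteq> 0" using cw h2 by (simp add: b12_def)
  have rB: "rpd (b11 c w h) (b12 c w h) (b22 c w h)" using detB b11p b22p h by (simp add: rpd_def)
  have C: "rs 1 0 h ** rs (b11 c w h) (b12 c w h) (b22 c w h) ** rs 1 0 h
      = rs (b11 c w h) (h * b12 c w h) (h * h * b22 c w h)" by (rule cong_diag)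
  have rC: "rpd (b11 c w h) (h * b12 c w h) (h * h * b22 c w h)" using rpd_cong[OF rB hne] .
  have dC: "b11 c w h * (h * h * b22 c w h) - (h * b12 c w h)^2 = h^4"
  proof -
    have "b11 c w h * (h * h * b22 c w h) - (h * b12 c w h)^2 = h^2 * (b11 c w h * b22 c w h - (b12 c w h)^2)"
      by (simp add: power2_eq_square algebra_simps)
    thus ?thesis using detB by (simp add: power2_eq_square power4_eq_xxxx)
  qed
  define be0 where "be0 = beta0 (tC c w h) (h^4) \<alpha>"
  define be1 where "be1 = beta1 (tC c w h) (h^4) \<alpha>"
  have Ca: "cmat_powr (rs (b11 c w h) (h * b12 c w h) (h * h * b22 c w h)) \<alpha>
     = rs (be0 + be1 * b11 c w h) (be1 * (h * b12 c w h)) (be0 + be1 * (h * h * b22 c w h))"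
    using rs_pow_interp[OF rC, of \<alpha>] b12ne hne dC unfolding be0_def be1_def tC_def by simp
  obtain a1 b1 c1 where Ca': "cmat_powr (rs (b11 c w h) (h * b12 c w h) (h * h * b22 c w h)) \<alpha> = rs a1 b1 c1"
    and rCa': "rpd a1 b1 c1" using rs_pow_form[OF rC] by blast
  have rCa: "rpd (be0 + be1 * b11 c w h) (be1 * (h * b12 c w h)) (be0 + be1 * (h * h * b22 c w h))"
    using Ca Ca' rCa' by simp
  have detCa: "(be0 + be1 * b11 c w h) * (be0 + be1 * (h * h * b22 c w h)) - (be1 * (h * b12 c w h))^2 = (h^4) powr \<alpha>"
    using rs_pow_det[OF rC, of \<alpha>] Ca dC by (metis det2_rs of_real_eq_iff)
  define G11 where "G11 = be0 + be1 * b11 c w h"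
  define G12 where "G12 = 1/h * (be1 * (h * b12 c w h))"
  define G22 where "G22 = 1/h * (1/h) * (be0 + be1 * (h * h * b22 c w h))"
  have gm: "gmean \<alpha> (matrix_inv (cmat_powr (rs 1 0 s) p)) (cmat_powr (rs (c^2 * 1 + w^2 * s) (c * w * (1 - s)) (w^2 * 1 + c^2 * s)) p)
     = rs G11 G12 G22"
    unfolding gmean_def Ap Bp Inv Ih1 Ih2 C Ca cong_diag G11_def G12_def G22_def ..
  have rG: "rpd G11 G12 G22" unfolding G11_def G12_def G22_def using rpd_cong[OF rCa, of "1/h"] hne by simp
  have detG: "G11 * G22 - G12^2 = (1/h) * (1/h) * (h^4) powr \<alpha>"
    unfolding G11_def G12_def G22_def detCa[symmetric] by (simp add: power2_eq_square algebra_simps)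
  obtain x y z where S: "cmat_powr (rs G11 G12 G22) (1/2) = rs x y z" and rS: "rpd x y z"
    using rs_pow_form[OF rG] by blast
  have SS: "rs x y z ** rs x y z = rs G11 G12 G22" using rs_pow_half[OF rG] S by simp
  hence SS': "G11 = x*x + y*y" "G12 = x*y + y*z" "G22 = y*y + z*z" unfolding sq_S by simp_all
  define m where "m = h powr (4 - 4*\<alpha>)"
  have mpos: "m > 0" using h by (simp add: m_def)
  have Xm: "cmat_powr (rs 1 0 (h^2)) (2 * (1 - \<alpha>)) = rs 1 0 m"
    using diag_powr[of 1 "h^2" "2 * (1 - \<alpha>)"] h sq_powr[of h "2 * (1 - \<alpha>)"] by (simp add: m_def algebra_simps)
  have Ft: "Ftilde \<alpha> (cmat_powr (rs 1 0 s) p) (cmat_powr (rs (c^2 * 1 + w^2 * s) (c * w * (1 - s)) (w^2 * 1 + c^2 * s)) p)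
     = rs (x*x + m*y*y) (x*y + m*y*z) (y*y + m*z*z)"
    unfolding Ftilde_def Let_def gm S
    by (simp only: Ap Xm prod_S)
  have x0: "x > 0" using rpd_pos[OF rS] by simp
  have dS: "x * z - y^2 > 0" using rS by (simp add: rpd_def)
  have dF: "(x*x + m*y*y) * (y*y + m*z*z) - (x*y + m*y*z)^2 = m * (x * z - y^2)^2"
    by (simp add: power2_eq_square algebra_simps)
  have rF: "rpd (x*x + m*y*y) (x*y + m*y*z) (y*y + m*z*z)"
  proof -
    have t1: "x*x > 0" using x0 by simp
    have t2: "m*y*y \<ge> 0" "y*y \<ge> 0" "m*z*z \<ge> 0" using mpos
      by (metis mult.assoc mult_nonneg_nonneg less_imp_le zero_le_square)+
    have "x*x + m*y*y + (y*y + m*z*z) > 0" using t1 t2 by linarith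
    moreover have "m * (x * z - y^2)^2 > 0" using mpos dS by simp
    ultimately show ?thesis unfolding rpd_def dF by simp
  qed
  have trF: "x*x + m*y*y + (y*y + m*z*z) = Tf \<alpha> c w h"
  proof -
    have "x*x + m*y*y + (y*y + m*z*z) = G11 + m * G22" unfolding SS' by (simp add: algebra_simps)
    thus ?thesis unfolding Tf_def G11_def G22_def m_def be0_def be1_def .
  qed
  have detF: "m * (x * z - y^2)^2 = h^2"
  proof -
    have "(x * z - y^2)^2 = G11 * G22 - G12^2" unfolding SS' by (simp add: power2_eq_square algebra_simps)
    hence "m * (x * z - y^2)^2 = h powr (4 - 4*\<alpha>) * h powr (4*\<alpha>) / (h * h)"
      using detG h four_powr[of h \<alpha>] by (simp add: m_def)
    also have "\<dots> = h powr 4 / (h*h)" by (simp add: powr_add[symmetric])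
    also have "\<dots> = h^2" using h by (simp add: power2_eq_square powr_numeral power4_eq_xxxx)
    finally show ?thesis .
  qed
  show ?thesis unfolding SGtilde_def Ft rs_pow_trace[OF rF] LHSf_def
    using trF dF detF by simp
qed

definition "M11 \<alpha> c w t = (1-\<alpha>) + \<alpha>*(c^2 + w^2*t)"
definition "M12 \<alpha> c w t = \<alpha>*(c*w*(1-t))"
definition "M22 \<alpha> c w t = (1-\<alpha>)*t + \<alpha>*(w^2 + c^2*t)"
definition "RHSg \<alpha> q c w t = evp (M11 \<alpha> c w t + M22 \<alpha> c w t) (M11 \<alpha> c w t * M22 \<alpha> c w t - (M12 \<alpha> c w t)^2) powr (1/q)
   + evm (M11 \<alpha> c w t + M22 \<alpha> c w t) (M11 \<alpha> c w t * M22 \<alpha> c w t - (M12 \<alpha> c w t)^2) powr (1/q)"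

lemma detM: "(c::real)^2 + w^2 = 1 \<Longrightarrow> M11 \<alpha> c w t * M22 \<alpha> c w t - (M12 \<alpha> c w t)^2 = t + \<alpha>*(1-\<alpha>)*w^2*(1-t)^2"
proof -
  assume "c^2 + w^2 = 1"
  hence c2: "c^2 = 1 - w^2" by simp
  have "M11 \<alpha> c w t * M22 \<alpha> c w t - (M12 \<alpha> c w t)^2 =
     ((1-\<alpha>) + \<alpha>*((1-w^2) + w^2*t)) * ((1-\<alpha>)*t + \<alpha>*(w^2 + (1-w^2)*t)) - \<alpha>^2*(1-w^2)*w^2*(1-t)^2"
    by (simp add: M11_def M12_def M22_def power_mult_distrib c2)
  also have "\<dots> = t + \<alpha>*(1-\<alpha>)*w^2*(1-t)^2" by (simp add: power2_eq_square algebra_simps)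
  finally show ?thesis .
qed

lemma concrete_Am:
  fixes \<alpha> q c w s :: real
  assumes al: "0 < \<alpha>" "\<alpha> < 1" and q: "q > 0" and cw: "c > 0" "w > 0" "c^2 + w^2 = 1" and s: "0 < s"
  shows "Re (trace (Amean \<alpha> q (rs 1 0 s) (rs (c^2 * 1 + w^2 * s) (c * w * (1 - s)) (w^2 * 1 + c^2 * s))))
     = RHSg \<alpha> q c w (s powr q)"
proof -
  define t where "t = s powr q"
  have t0: "t > 0" using s by (simp add: t_def)
  have Aq: "cmat_powr (rs 1 0 s) q = rs 1 0 t" using diag_powr[of 1 s q] s by (simp add: t_def)
  have Bq: "cmat_powr (rs (c^2 * 1 + w^2 * s) (c * w * (1 - s)) (w^2 * 1 + c^2 * s)) q
      = rs (c^2 + w^2 * t) (c * w * (1 - t)) (w^2 + c^2 * t)"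
    using rot_powr[OF cw(3), of 1 s q] s by (simp add: t_def)
  have M: "(1 - \<alpha>) *\<^sub>R rs 1 0 t + \<alpha> *\<^sub>R rs (c^2 + w^2 * t) (c * w * (1 - t)) (w^2 + c^2 * t)
     = rs (M11 \<alpha> c w t) (M12 \<alpha> c w t) (M22 \<alpha> c w t)"
    unfolding lin_rs by (simp add: M11_def M12_def M22_def)
  have tr: "M11 \<alpha> c w t + M22 \<alpha> c w t > 0"
    unfolding M11_def M22_def using al t0 by (intro add_pos_nonneg) (auto intro!: add_nonneg_nonneg mult_nonneg_nonneg)
  have "\<alpha>*(1-\<alpha>)*w^2*(1-t)^2 \<ge> 0" using al by simp
  hence "M11 \<alpha> c w t * M22 \<alpha> c w t - (M12 \<alpha> c w t)^2 > 0" using detM[OF cw(3)] t0 by simp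
  hence rM: "rpd (M11 \<alpha> c w t) (M12 \<alpha> c w t) (M22 \<alpha> c w t)" using tr by (simp add: rpd_def)
  show ?thesis unfolding Amean_def Aq Bq M rs_pow_trace[OF rM] RHSg_def t_def[symmetric] by simp
qed

lemma tendsto_evp: "(f \<longlongrightarrow> (a::real)) F \<Longrightarrow> (g \<longlongrightarrow> b) F \<Longrightarrow> ((\<lambda>x. evp (f x) (g x)) \<longlongrightarrow> evp a b) F"
  unfolding evp_def by (intro tendsto_intros | simp)+

lemma tendsto_evm: "(f \<longlongrightarrow> (a::real)) F \<Longrightarrow> (g \<longlongrightarrow> b) F \<Longrightarrow> ((\<lambda>x. evm (f x) (g x)) \<longlongrightarrow> evm a b) F"
  unfolding evm_def by (intro tendsto_intros | simp)+

lemma evp_zero: "x > 0 \<Longrightarrow> evp x 0 = x"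
  unfolding evp_def by (simp add: real_sqrt_divide power_divide)

lemma evm_zero: "x > 0 \<Longrightarrow> evm x 0 = 0"
  unfolding evm_def by (simp add: real_sqrt_divide power_divide)

lemma evm_nonneg: "T > 0 \<Longrightarrow> D \<ge> 0 \<Longrightarrow> evm T D \<ge> 0"
proof -
  assume T: "T > 0" and D: "D \<ge> 0"
  have "sqrt (T^2/4 - D) \<le> sqrt ((T/2)^2)" using D by (intro real_sqrt_le_mono) (simp add: power_divide)
  thus ?thesis using T unfolding evm_def by simp
qed

lemma evp_evm_mult: "t^2/4 - D \<ge> 0 \<Longrightarrow> evp t D * evm t D = D"
  unfolding evp_def evm_def by (simp add: algebra_simps power2_eq_square[symmetric] power_divide)

lemma C_facts:
  fixes c w h :: real
  assumes cw: "c > 0" "w > 0" "c^2 + w^2 = 1" and h: "0 < h" "h < 1"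
  shows "evp (tC c w h) (h^4) > evm (tC c w h) (h^4)" "evm (tC c w h) (h^4) > 0"
    "evp (tC c w h) (h^4) * evm (tC c w h) (h^4) = h^4"
proof -
  have hne: "h \<noteq> 0" using h by simp
  have h2: "h^2 < 1" using h by (simp add: power_less_one_iff abs_less_iff)
  have detB: "b11 c w h * b22 c w h - (b12 c w h)^2 = h^2"
  proof -
    have "b11 c w h * b22 c w h - (b12 c w h)^2 = h^2 * (c^2 + w^2)^2"
      by (simp add: b11_def b12_def b22_def power2_eq_square algebra_simps)
    thus ?thesis using cw(3) by simp
  qed
  have b11p: "b11 c w h > 0" using cw by (simp add: b11_def add_pos_nonneg)
  have b22p: "b22 c w h > 0" using cw by (simp add: b22_def add_pos_nonneg)
  have b12ne: "b12 c w h \<noteq> 0" using cw h2 by (simp add: b12_def)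
  have rB: "rpd (b11 c w h) (b12 c w h) (b22 c w h)" using detB b11p b22p h by (simp add: rpd_def)
  have rC: "rpd (b11 c w h) (h * b12 c w h) (h * h * b22 c w h)" using rpd_cong[OF rB hne] .
  have dC: "b11 c w h * (h * h * b22 c w h) - (h * b12 c w h)^2 = h^4"
  proof -
    have "b11 c w h * (h * h * b22 c w h) - (h * b12 c w h)^2 = h^2 * (b11 c w h * b22 c w h - (b12 c w h)^2)"
      by (simp add: power2_eq_square algebra_simps)
    thus ?thesis using detB by (simp add: power2_eq_square power4_eq_xxxx)
  qed
  have bne: "h * b12 c w h \<noteq> 0" using hne b12ne by simp
  note P = rpd_params[OF rC]
  show "evp (tC c w h) (h^4) > evm (tC c w h) (h^4)" "evm (tC c w h) (h^4) > 0"
    using P(5) P(6)[OF bne] unfolding tC_def dC by auto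
  show "evp (tC c w h) (h^4) * evm (tC c w h) (h^4) = h^4"
    using evp_evm_mult[OF P(3)] unfolding tC_def dC .
qed

lemma limL:
  fixes \<alpha> p c w :: real
  assumes al: "0 < \<alpha>" "\<alpha> < 1" and p: "p > 0" and cw: "c > 0" "w > 0" "c^2 + w^2 = 1"
  shows "((\<lambda>h. LHSf \<alpha> p c w h) \<longlongrightarrow> ((c^2) powr \<alpha>) powr (1/p)) (at_right 0)"
proof -
  let ?F = "at_right (0::real)"
  have ev: "eventually (\<lambda>h. 0 < h \<and> h < 1) ?F" using eventually_at_right_real[of 0 1] by simp
  have h0: "((\<lambda>h. h) \<longlongrightarrow> 0) ?F" by (rule tendsto_ident_at)
  have c2: "c^2 > 0" using cw by simp
  define g where "g h = evp (tC c w h) (h^4)" for h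
  define gm where "gm h = evm (tC c w h) (h^4)" for h
  define ga where "ga h = g h powr \<alpha>" for h
  define gma where "gma h = gm h powr \<alpha>" for h
  define be1 where "be1 h = (ga h - gma h) / (g h - gm h)" for h
  define be0 where "be0 h = ga h - be1 h * g h" for h
  define m where "m h = h powr (4 - 4*\<alpha>)" for h
  define Q where "Q h = (h^2 * g h / ga h - h powr (6 - 4*\<alpha>) * ga h / g h) / (g h - gm h)" for h
  have lb11: "((\<lambda>h. b11 c w h) \<longlongrightarrow> c^2) ?F" unfolding b11_def using h0 by (auto intro!: tendsto_eq_intros)
  have lb22: "((\<lambda>h. b22 c w h) \<longlongrightarrow> w^2) ?F" unfolding b22_def using h0 by (auto intro!: tendsto_eq_intros)
  have ltC: "((\<lambda>h. tC c w h) \<longlongrightarrow> c^2) ?F" unfolding tC_def using h0 lb11 lb22 by (auto intro!: tendsto_eq_intros)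
  have h4: "((\<lambda>h. h^4) \<longlongrightarrow> 0) ?F" using h0 by (auto intro!: tendsto_eq_intros)
  have lg: "(g \<longlongrightarrow> c^2) ?F" unfolding g_def using tendsto_evp[OF ltC h4] evp_zero[OF c2] by simp
  have lgm: "(gm \<longlongrightarrow> 0) ?F" unfolding gm_def using tendsto_evm[OF ltC h4] evm_zero[OF c2] by simp
  have evC: "eventually (\<lambda>h. g h > gm h \<and> gm h > 0 \<and> g h * gm h = h^4) ?F"
    using ev by eventually_elim (use C_facts[OF cw] in \<open>auto simp: g_def gm_def\<close>)
  have lga: "(ga \<longlongrightarrow> (c^2) powr \<alpha>) ?F" unfolding ga_def using lg c2 by (auto intro!: tendsto_eq_intros)
  have lgma: "(gma \<longlongrightarrow> 0) ?F" unfolding gma_def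
  proof (rule tendsto_eq_rhs[OF tendsto_powr'[OF lgm tendsto_const]])
    show "0 \<noteq> 0 \<or> 0 < \<alpha> \<and> eventually (\<lambda>x. gm x \<ge> 0) ?F"
      using al evC by (auto elim: eventually_mono)
  qed simp
  have lbe1: "(be1 \<longlongrightarrow> (c^2) powr \<alpha> / c^2) ?F" unfolding be1_def using lga lgma lg lgm c2
    by (auto intro!: tendsto_eq_intros)
  have lbe0: "(be0 \<longlongrightarrow> 0) ?F" unfolding be0_def using lga lbe1 lg c2
    by (auto intro!: tendsto_eq_intros)
  have lm: "(m \<longlongrightarrow> 0) ?F" unfolding m_def
  proof (rule tendsto_eq_rhs[OF tendsto_powr'[OF h0 tendsto_const]])
    show "0 \<noteq> 0 \<or> 0 < 4 - 4*\<alpha> \<and> eventually (\<lambda>x. x \<ge> (0::real)) ?F"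
      using al ev by (auto elim: eventually_mono)
  qed simp
  have l6: "((\<lambda>h. h powr (6 - 4*\<alpha>)) \<longlongrightarrow> 0) ?F"
  proof (rule tendsto_eq_rhs[OF tendsto_powr'[OF h0 tendsto_const]])
    show "0 \<noteq> 0 \<or> 0 < 6 - 4*\<alpha> \<and> eventually (\<lambda>x. x \<ge> (0::real)) ?F"
      using al ev by (auto elim: eventually_mono)
  qed simp
  have gapos: "(c^2) powr \<alpha> > 0" using c2 by simp
  have h2: "((\<lambda>h. h^2) \<longlongrightarrow> 0) ?F" using h0 by (auto intro!: tendsto_eq_intros)
  have lQ: "(Q \<longlongrightarrow> 0) ?F" unfolding Q_def
  proof (rule tendsto_eq_rhs[OF tendsto_divide[OF tendsto_diff[OF tendsto_divide[OF tendsto_mult[OF h2 lg] lga] tendsto_divide[OF tendsto_mult[OF l6 lga] lg]] tendsto_diff[OF lg lgm]]])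
    show "(c^2) powr \<alpha> \<noteq> 0" "c^2 \<noteq> 0" "c^2 - 0 \<noteq> 0" using gapos c2 by auto
  qed simp
  have lT': "((\<lambda>h. be0 h + be1 h * b11 c w h + Q h + m h * be1 h * b22 c w h) \<longlongrightarrow> (c^2) powr \<alpha>) ?F"
    using lbe0 lbe1 lb11 lQ lm lb22 c2 by (auto intro!: tendsto_eq_intros)
  have eqT: "eventually (\<lambda>h. Tf \<alpha> c w h = be0 h + be1 h * b11 c w h + Q h + m h * be1 h * b22 c w h) ?F"
    using ev evC
  proof eventually_elim
    case (elim h)
    hence h: "0 < h" "h < 1" and gg: "g h > gm h" "gm h > 0" "g h * gm h = h^4" by auto
    have gp: "g h > 0" using gg by simp
    have gne: "g h - gm h \<noteq> 0" using gg by simp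
    have b0: "be0 h = (gma h * g h - ga h * gm h) / (g h - gm h)"
      unfolding be0_def be1_def using gne by (simp add: field_simps)
    have gmq: "gm h = h^4 / g h" using gg gp by (simp add: field_simps)
    have gma': "gma h = h powr (4*\<alpha>) / ga h"
      unfolding gma_def ga_def gmq using h gp by (simp add: powr_divide four_powr)
    have mh: "m h * h powr (4*\<alpha>) = h^4" unfolding m_def using h
      by (simp add: powr_add[symmetric] powr_numeral)
    have mh2: "m h * h^4 / (h * h) = h powr (6 - 4*\<alpha>)"
    proof -
      have "h^4 / (h*h) = h powr 2" using h by (simp add: powr_numeral power4_eq_xxxx power2_eq_square)
      hence "m h * h^4 / (h * h) = h powr (4 - 4*\<alpha>) * h powr 2" unfolding m_def by (metis times_divide_eq_right)
      thus ?thesis by (simp add: powr_add[symmetric])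
    qed
    have gap: "ga h > 0" unfolding ga_def using gp by simp
    have "m h * ((1/h) * (1/h) * be0 h) = Q h"
    proof -
      have "m h * ((1/h) * (1/h) * be0 h) = (m h * gma h * g h / (h*h) - ga h * (m h * gm h / (h*h))) / (g h - gm h)"
        unfolding b0 using h gne by (simp add: field_simps)
      also have "m h * gma h * g h / (h*h) = h^2 * g h / ga h"
        unfolding gma' using mh[symmetric] h gap by (simp add: field_simps power2_eq_square power4_eq_xxxx)
      also have "m h * gm h / (h*h) = h powr (6 - 4*\<alpha>) / g h"
        unfolding gmq using mh2 h gp by (simp add: field_simps)
      finally show ?thesis unfolding Q_def using gp by (simp add: field_simps)
    qed
    moreover have "beta0 (tC c w h) (h^4) \<alpha> = be0 h" "beta1 (tC c w h) (h^4) \<alpha> = be1 h"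
      unfolding beta0_def beta1_def be0_def be1_def ga_def gma_def g_def gm_def by simp_all
    ultimately show ?case unfolding Tf_def m_def using h by (simp add: field_simps)
  qed
  have lT: "((\<lambda>h. Tf \<alpha> c w h) \<longlongrightarrow> (c^2) powr \<alpha>) ?F"
    using lT' eqT by (simp add: tendsto_cong)
  have lp: "((\<lambda>h. evp (Tf \<alpha> c w h) (h^2)) \<longlongrightarrow> (c^2) powr \<alpha>) ?F"
    using tendsto_evp[OF lT h2] evp_zero[OF gapos] by simp
  have lmm: "((\<lambda>h. evm (Tf \<alpha> c w h) (h^2)) \<longlongrightarrow> 0) ?F"
    using tendsto_evm[OF lT h2] evm_zero[OF gapos] by simp
  have evT: "eventually (\<lambda>h. Tf \<alpha> c w h > 0) ?F" using order_tendstoD(1)[OF lT gapos] .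
  have evm0: "eventually (\<lambda>h. evm (Tf \<alpha> c w h) (h^2) \<ge> 0) ?F"
    using evT by eventually_elim (simp add: evm_nonneg)
  have l1: "((\<lambda>h. evp (Tf \<alpha> c w h) (h^2) powr (1/p)) \<longlongrightarrow> ((c^2) powr \<alpha>) powr (1/p)) ?F"
    using lp gapos by (auto intro!: tendsto_eq_intros)
  have l2: "((\<lambda>h. evm (Tf \<alpha> c w h) (h^2) powr (1/p)) \<longlongrightarrow> 0) ?F"
  proof (rule tendsto_eq_rhs[OF tendsto_powr'[OF lmm tendsto_const]])
    show "0 \<noteq> 0 \<or> 0 < 1/p \<and> eventually (\<lambda>h. evm (Tf \<alpha> c w h) (h^2) \<ge> 0) ?F"
      using p evm0 by simp
  qed (use p in simp)
  show ?thesis unfolding LHSf_def using tendsto_add[OF l1 l2] by simp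
qed

lemma limR:
  fixes \<alpha> p q c w :: real
  assumes al: "0 < \<alpha>" "\<alpha> < 1" and p: "p > 0" and q: "q > 0" and cw: "c > 0" "w > 0" "c^2 + w^2 = 1"
  shows "((\<lambda>h. RHSg \<alpha> q c w ((h powr (2/p)) powr q)) \<longlongrightarrow> RHSg \<alpha> q c w 0) (at_right 0)"
proof -
  let ?F = "at_right (0::real)"
  have ev: "eventually (\<lambda>h. 0 < h \<and> h < 1) ?F" using eventually_at_right_real[of 0 1] by simp
  have h0: "((\<lambda>h. h) \<longlongrightarrow> 0) ?F" by (rule tendsto_ident_at)
  have ls: "((\<lambda>h. h powr (2/p)) \<longlongrightarrow> 0) ?F"
  proof (rule tendsto_eq_rhs[OF tendsto_powr'[OF h0 tendsto_const]])
    show "0 \<noteq> 0 \<or> 0 < 2/p \<and> eventually (\<lambda>x. x \<ge> (0::real)) ?F"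
      using p ev by (auto elim: eventually_mono)
  qed (use p in simp)
  have lt: "((\<lambda>h. (h powr (2/p)) powr q) \<longlongrightarrow> 0) ?F"
  proof (rule tendsto_eq_rhs[OF tendsto_powr'[OF ls tendsto_const]])
    show "0 \<noteq> 0 \<or> 0 < q \<and> eventually (\<lambda>x. x powr (2/p) \<ge> (0::real)) ?F"
      using q by simp
  qed (use q in simp)
  define \<tau> where "\<tau> h = (h powr (2/p)) powr q" for h
  have lt': "(\<tau> \<longlongrightarrow> 0) ?F" using lt unfolding \<tau>_def .
  have l11: "((\<lambda>h. M11 \<alpha> c w (\<tau> h)) \<longlongrightarrow> M11 \<alpha> c w 0) ?F" unfolding M11_def using lt' by (auto intro!: tendsto_eq_intros)
  have l12: "((\<lambda>h. M12 \<alpha> c w (\<tau> h)) \<longlongrightarrow> M12 \<alpha> c w 0) ?F" unfolding M12_def using lt' by (auto intro!: tendsto_eq_intros)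
  have l22: "((\<lambda>h. M22 \<alpha> c w (\<tau> h)) \<longlongrightarrow> M22 \<alpha> c w 0) ?F" unfolding M22_def using lt' by (auto intro!: tendsto_eq_intros)
  have ltr: "((\<lambda>h. M11 \<alpha> c w (\<tau> h) + M22 \<alpha> c w (\<tau> h)) \<longlongrightarrow> M11 \<alpha> c w 0 + M22 \<alpha> c w 0) ?F"
    by (rule tendsto_add[OF l11 l22])
  have ldt: "((\<lambda>h. M11 \<alpha> c w (\<tau> h) * M22 \<alpha> c w (\<tau> h) - (M12 \<alpha> c w (\<tau> h))^2) \<longlongrightarrow>
      M11 \<alpha> c w 0 * M22 \<alpha> c w 0 - (M12 \<alpha> c w 0)^2) ?F"
    by (intro tendsto_diff tendsto_mult tendsto_power l11 l12 l22)
  have tr0: "M11 \<alpha> c w 0 + M22 \<alpha> c w 0 > 0"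
    unfolding M11_def M22_def using al cw by (simp add: add_pos_nonneg)
  have "\<alpha>*(1-\<alpha>)*w^2*(1-0)^2 > 0" using al cw by simp
  hence dt0: "M11 \<alpha> c w 0 * M22 \<alpha> c w 0 - (M12 \<alpha> c w 0)^2 > 0" using detM[OF cw(3), of \<alpha> 0] by simp
  have rM0: "rpd (M11 \<alpha> c w 0) (M12 \<alpha> c w 0) (M22 \<alpha> c w 0)" using tr0 dt0 by (simp add: rpd_def)
  note P = rpd_params[OF rM0]
  show ?thesis unfolding RHSg_def \<tau>_def[symmetric]
    by (intro tendsto_add tendsto_powr' tendsto_evp tendsto_evm ltr ldt tendsto_const)
       (use P(4) P(5) in auto)
qed

lemma inv_id: "1 + (y::real) \<noteq> 0 \<Longrightarrow> 1/(1+y) = 1 - y/(1+y)"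
  by (simp add: field_simps)

lemma scalar:
  fixes \<alpha> p q :: real
  assumes al: "0 < \<alpha>" "\<alpha> < 1" and p: "p > 0" and q: "q > 0" "q < 1" and gap: "q < (1 - \<alpha>) * p"
  shows "\<exists>\<delta>. 0 < \<delta> \<and> \<delta> < 1/2 \<and>
     (1 - \<delta>) powr (\<alpha>/p) > evp 1 (\<alpha>*(1-\<alpha>)*\<delta>) powr (1/q) + evm 1 (\<alpha>*(1-\<alpha>)*\<delta>) powr (1/q)"
proof -
  let ?F = "at_right (0::real)"
  define k0 where "k0 = \<alpha>*(1-\<alpha>)"
  define r where "r = \<alpha>/p"
  have k0p: "k0 > 0" using al by (simp add: k0_def)
  have k0le: "k0 \<le> 1/4"
  proof -
    have "1/4 - k0 = (\<alpha> - 1/2)^2" by (simp add: k0_def power2_eq_square algebra_simps)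
    thus ?thesis by (metis diff_ge_0_iff_ge zero_le_power2)
  qed
  have r0: "r \<ge> 0" using al p by (simp add: r_def)
  have g0: "k0/q - r > 0"
  proof -
    have "\<alpha> * q < \<alpha> * ((1 - \<alpha>) * p)" using gap al by simp
    hence "\<alpha> / p < \<alpha> * (1 - \<alpha>) / q" using p q by (simp add: field_simps)
    thus ?thesis by (simp add: k0_def r_def)
  qed
  define \<phi> where "\<phi> d = (k0/q)/(1 + k0*d/q) - r/(1-d) - (2*k0) powr (1/q) * d powr (1/q - 1)" for d
  have h0: "((\<lambda>h. h) \<longlongrightarrow> 0) ?F" by (rule tendsto_ident_at)
  have ev: "eventually (\<lambda>h. 0 < h \<and> h < 1/2) ?F" using eventually_at_right_real[of 0 "1/2"] by simp
  have le: "((\<lambda>d. d powr (1/q - 1)) \<longlongrightarrow> 0) ?F"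
  proof (rule tendsto_eq_rhs[OF tendsto_powr'[OF h0 tendsto_const]])
    have "1/q > 1" using q by simp
    thus "0 \<noteq> 0 \<or> 0 < 1/q - 1 \<and> eventually (\<lambda>x. x \<ge> (0::real)) ?F"
      using ev by (auto elim: eventually_mono)
  qed (use q in simp)
  have l1: "((\<lambda>d. (k0/q)/(1 + k0*d/q)) \<longlongrightarrow> k0/q) ?F" using h0 q by (auto intro!: tendsto_eq_intros)
  have l2: "((\<lambda>d. r/(1-d)) \<longlongrightarrow> r) ?F" using h0 by (auto intro!: tendsto_eq_intros)
  have l3: "((\<lambda>d. (2*k0) powr (1/q) * d powr (1/q - 1)) \<longlongrightarrow> 0) ?F"
    using tendsto_mult[OF tendsto_const le, of "(2*k0) powr (1/q)"] by simp
  have lphi: "(\<phi> \<longlongrightarrow> k0/q - r) ?F" unfolding \<phi>_def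
    using tendsto_diff[OF tendsto_diff[OF l1 l2] l3] by simp
  have "eventually (\<lambda>d. \<phi> d > 0) ?F" using order_tendstoD(1)[OF lphi g0] .
  hence "eventually (\<lambda>d. \<phi> d > 0 \<and> 0 < d \<and> d < 1/2) ?F" using ev by eventually_elim auto
  then obtain \<delta> where phi: "\<phi> \<delta> > 0" and d: "0 < \<delta>" "\<delta> < 1/2"
    using eventually_happens'[OF trivial_limit_at_right_real] by blast
  define \<kappa> where "\<kappa> = k0 * \<delta>"
  have kp: "\<kappa> > 0" using k0p d by (simp add: \<kappa>_def)
  have "k0 * \<delta> \<le> k0 * 1" using k0p d by (intro mult_left_mono) auto
  hence kle: "\<kappa> \<le> 1/4" using k0le unfolding \<kappa>_def by simp
  define mm where "mm = evm 1 \<kappa>"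
  define mp where "mp = evp 1 \<kappa>"
  have disc: "1^2/4 - \<kappa> \<ge> 0" using kle by simp
  have mpos: "mm > 0" "mp \<ge> mm" using evp_evm_pos[OF _ kp disc] by (auto simp: mm_def mp_def)
  have msum: "mp + mm = 1" by (simp add: mp_def mm_def evp_def evm_def)
  have mprod: "mp * mm = \<kappa>" using evp_evm_mult[OF disc] by (simp add: mp_def mm_def)
  have mp_half: "mp \<ge> 1/2" using mpos msum by simp
  have mp_pos: "mp > 0" using mp_half by simp
  have mm_ge: "mm \<ge> \<kappa>"
  proof -
    have "mp \<le> 1" using msum mpos by simp
    hence "mp * mm \<le> 1 * mm" using mpos by (intro mult_right_mono) auto
    thus ?thesis using mprod by simp
  qed
  have mm_le: "mm \<le> 2 * \<kappa>"
  proof -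
    have "1/2 * mm \<le> mp * mm" using mp_half mpos by (intro mult_right_mono) auto
    thus ?thesis using mprod by simp
  qed
  have A1: "mp powr (1/q) \<le> exp (- \<kappa> / q)"
  proof -
    have "ln mp \<le> mp - 1" using mp_pos by (rule ln_le_minus_one)
    hence "ln mp \<le> - \<kappa>" using msum mm_ge by simp
    hence "(1/q) * ln mp \<le> (1/q) * (- \<kappa>)" using q by (intro mult_left_mono) auto
    hence "exp ((1/q) * ln mp) \<le> exp (- \<kappa> / q)" by simp
    thus ?thesis using mp_pos by (simp add: powr_def)
  qed
  have A2: "exp (- \<kappa> / q) \<le> 1 / (1 + \<kappa>/q)"
  proof -
    have "1 + \<kappa>/q \<le> exp (\<kappa>/q)" by (rule exp_ge_add_one_self)
    moreover have "1 + \<kappa>/q > 0" using kp q by (simp add: add_pos_pos)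
    ultimately have "1 / exp (\<kappa>/q) \<le> 1 / (1 + \<kappa>/q)" by (intro divide_left_mono) auto
    thus ?thesis by (simp add: exp_minus inverse_eq_divide)
  qed
  have B: "mm powr (1/q) \<le> (2*\<kappa>) powr (1/q)" using mpos mm_le q by (intro powr_mono2) auto
  have C: "(1 - \<delta>) powr r \<ge> 1 - r * \<delta> / (1 - \<delta>)"
  proof -
    have dp: "1 - \<delta> > 0" using d by simp
    have "ln (1 / (1 - \<delta>)) \<le> 1 / (1 - \<delta>) - 1" using dp by (intro ln_le_minus_one) simp
    hence "- ln (1 - \<delta>) \<le> \<delta> / (1 - \<delta>)" using dp by (simp add: ln_div field_simps)
    hence "r * ln (1 - \<delta>) \<ge> - (r * \<delta> / (1 - \<delta>))" using r0
      by (metis minus_le_iff mult_left_mono mult_minus_right times_divide_eq_right)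
    moreover have "1 + r * ln (1 - \<delta>) \<le> exp (r * ln (1 - \<delta>))" by (rule exp_ge_add_one_self)
    moreover have "(1 - \<delta>) powr r = exp (r * ln (1 - \<delta>))" using dp by (simp add: powr_def)
    ultimately show ?thesis by linarith
  qed
  have D: "(\<kappa>/q)/(1 + \<kappa>/q) - r * \<delta> / (1 - \<delta>) - (2*\<kappa>) powr (1/q) > 0"
  proof -
    have e1: "\<delta> * ((k0/q)/(1 + k0*\<delta>/q)) = (\<kappa>/q)/(1 + \<kappa>/q)" by (simp add: \<kappa>_def field_simps)
    have e2: "\<delta> * (r/(1-\<delta>)) = r * \<delta> / (1 - \<delta>)" by simp
    have "\<delta> * \<delta> powr (1/q - 1) = \<delta> powr 1 * \<delta> powr (1/q - 1)" using d by simp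
    also have "\<dots> = \<delta> powr (1/q)" by (subst powr_add[symmetric]) simp
    finally have "\<delta> * ((2*k0) powr (1/q) * \<delta> powr (1/q - 1)) = (2*k0) powr (1/q) * \<delta> powr (1/q)" by simp
    also have "\<dots> = (2*\<kappa>) powr (1/q)" unfolding \<kappa>_def using k0p d by (simp add: powr_mult mult.assoc)
    finally have e3: "\<delta> * ((2*k0) powr (1/q) * \<delta> powr (1/q - 1)) = (2*\<kappa>) powr (1/q)" .
    have "\<delta> * \<phi> \<delta> > 0" using d phi by simp
    also have "\<delta> * \<phi> \<delta> = (\<kappa>/q)/(1 + \<kappa>/q) - r * \<delta> / (1 - \<delta>) - (2*\<kappa>) powr (1/q)"
      unfolding \<phi>_def e1[symmetric] e2[symmetric] e3[symmetric] by (simp add: algebra_simps)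
    finally show ?thesis .
  qed
  have E: "1 / (1 + \<kappa>/q) = 1 - (\<kappa>/q)/(1 + \<kappa>/q)"
  proof -
    have "1 + \<kappa>/q > 0" using kp q by (simp add: add_pos_pos)
    hence "1 + \<kappa>/q \<noteq> 0" by simp
    thus ?thesis by (rule inv_id)
  qed
  have "mp powr (1/q) + mm powr (1/q) < (1 - \<delta>) powr r" using A1 A2 B C D E by linarith
  thus ?thesis using d unfolding mp_def mm_def \<kappa>_def k0_def r_def by blast
qed

theorem theorem4p37:
  fixes \<alpha> p q :: real
  assumes "0 < \<alpha>" and "\<alpha> < 1" and "0 < p" and "0 < q"
    and "\<forall>A B :: complex^2^2. cmat_posdef A \<and> cmat_posdef B \<longrightarrow>
           Re (trace (SGtilde \<alpha> p A B)) \<le> Re (trace (Amean \<alpha> q A B))"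
  shows "min 1 ((1 - \<alpha>) * p) \<le> q"
proof (rule ccontr)
  assume "\<not> min 1 ((1 - \<alpha>) * p) \<le> q"
  hence q1: "q < 1" and gap: "q < (1 - \<alpha>) * p" by auto
  obtain \<delta> where d: "0 < \<delta>" "\<delta> < 1/2" and ineq:
    "(1 - \<delta>) powr (\<alpha>/p) > evp 1 (\<alpha>*(1-\<alpha>)*\<delta>) powr (1/q) + evm 1 (\<alpha>*(1-\<alpha>)*\<delta>) powr (1/q)"
    using scalar[OF assms(1,2,3,4) q1 gap] by blast
  define c where "c = sqrt (1 - \<delta>)"
  define w where "w = sqrt \<delta>"
  have c0: "c > 0" and w0: "w > 0" using d by (simp_all add: c_def w_def)
  have c2: "c^2 = 1 - \<delta>" and w2: "w^2 = \<delta>" using d by (simp_all add: c_def w_def)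
  have cw: "c^2 + w^2 = 1" using c2 w2 by simp
  let ?F = "at_right (0::real)"
  have ev: "eventually (\<lambda>h. 0 < h \<and> h < 1) ?F" using eventually_at_right_real[of 0 1] by simp
  have le: "eventually (\<lambda>h. LHSf \<alpha> p c w h \<le> RHSg \<alpha> q c w ((h powr (2/p)) powr q)) ?F"
    using ev
  proof eventually_elim
    case (elim h)
    hence h: "0 < h" "h < 1" by auto
    define s where "s = h powr (2/p)"
    have s0: "s > 0" using h by (simp add: s_def)
    have rA: "rpd 1 0 s" using s0 by (simp add: rpd_def)
    have "(c^2 * 1 + w^2 * s) * (w^2 * 1 + c^2 * s) - (c * w * (1 - s))^2 = s * (c^2 + w^2)^2"
      by (simp add: power2_eq_square algebra_simps)
    hence dB: "(c^2 * 1 + w^2 * s) * (w^2 * 1 + c^2 * s) - (c * w * (1 - s))^2 = s" using cw by simp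
    have "c^2 * 1 + w^2 * s + (w^2 * 1 + c^2 * s) > 0" using c0 w0 s0
      by (intro add_pos_pos) (auto intro!: add_pos_pos)
    hence rB: "rpd (c^2 * 1 + w^2 * s) (c * w * (1 - s)) (w^2 * 1 + c^2 * s)"
      using dB s0 by (simp add: rpd_def)
    have "Re (trace (SGtilde \<alpha> p (rs 1 0 s) (rs (c^2 * 1 + w^2 * s) (c * w * (1 - s)) (w^2 * 1 + c^2 * s))))
       \<le> Re (trace (Amean \<alpha> q (rs 1 0 s) (rs (c^2 * 1 + w^2 * s) (c * w * (1 - s)) (w^2 * 1 + c^2 * s))))"
      using assms(5) rpd_posdef[OF rA] rpd_posdef[OF rB] by blast
    thus ?case
      unfolding s_def concrete_SG[OF assms(1,2,3) c0 w0 cw h] concrete_Am[OF assms(1,2,4) c0 w0 cw s0[unfolded s_def]] .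
  qed
  have "((c^2) powr \<alpha>) powr (1/p) \<le> RHSg \<alpha> q c w 0"
    by (rule tendsto_le[OF trivial_limit_at_right_real limR[OF assms(1,2,3,4) c0 w0 cw] limL[OF assms(1,2,3) c0 w0 cw] le])
  moreover have "((c^2) powr \<alpha>) powr (1/p) = (1 - \<delta>) powr (\<alpha>/p)" by (simp add: c2 powr_powr)
  moreover have "RHSg \<alpha> q c w 0 = evp 1 (\<alpha>*(1-\<alpha>)*\<delta>) powr (1/q) + evm 1 (\<alpha>*(1-\<alpha>)*\<delta>) powr (1/q)"
  proof -
    have t: "M11 \<alpha> c w 0 + M22 \<alpha> c w 0 = 1" unfolding M11_def M22_def using cw
      by (simp add: algebra_simps) (metis distrib_left mult.right_neutral)
    have dd: "M11 \<alpha> c w 0 * M22 \<alpha> c w 0 - (M12 \<alpha> c w 0)^2 = \<alpha>*(1-\<alpha>)*\<delta>"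
      using detM[OF cw, of \<alpha> 0] w2 by simp
    show ?thesis unfolding RHSg_def t dd ..
  qed
  ultimately show False using ineq by simp
qed

end
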